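(* Every Type $\mathcal A$ affine surface geometry is strongly linearly projectively equivalent to a flat Type $\mathcal A$ affine surface geometry: for every Type $\mathcal A$ connection $\nabla$ on $\mathbb R^2$ there exist a real linear function $L$ and a flat Type $\mathcal A$ connection $\tilde\nabla$ with $\tilde\nabla={}^{-L}\nabla$ (equivalently $\nabla={}^{L}\tilde\nabla$).
   Context: An affine manifold $(M,\nabla)$ is a smooth manifold with a torsion-free connection on $TM$, with Christoffel symbols $\nabla_{\partial_{x^i}}\partial_{x^j}=\Gamma_{ij}^k\partial_{x^k}$. For real constants, $\Gamma(a,b,c,d,e,f)$ denotes the connection on $\mathbb R^2$ whose Christoffel symbols in the standard coordinates $(x^1,x^2)$ are the constants $\Gamma_{11}^1=a$, $\Gamma_{11}^2=b$, $\Gamma_{12}^1=\Gamma_{21}^1=c$, $\Gamma_{12}^2=\Gamma_{21}^2=d$, $\Gamma_{22}^1=e$, $\Gamma_{22}^2=f$; a Type $\mathcal A$ connection (affine surface geometry) is $(\mathbb R^2,\Gamma(a,b,c,d,e,f))$. For $g\in C^\infty(M)$ define ${}^g\nabla_XY:=\nabla_XY+X(g)Y+Y(g)X$. A linear function is $L(x^1,x^2)=a_1x^1+a_2x^2$ with $a_1,a_2\in\mathbb R$; for such $L$, ${}^L\Gamma(a,b,c,d,e,f)=\Gamma(a+2a_1,b,c+a_2,d+a_1,e,f+2a_2)$. Two Type $\mathcal A$ connections $\nabla,\tilde\nabla$ are strongly linearly projectively equivalent if $\tilde\nabla={}^L\nabla$ for some linear function $L$. *)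

theory Defs
  imports Complex_Main
begin

text \<open>A Type A connection Gamma(a,b,c,d,e,f) on R^2, given by its six constant
  Christoffel symbols (a,b,c,d,e,f) =
  (Gamma_11^1, Gamma_11^2, Gamma_12^1, Gamma_12^2, Gamma_22^1, Gamma_22^2).\<close>
type_synonym typeA = "real \<times> real \<times> real \<times> real \<times> real \<times> real"

definition Chr :: "typeA \<Rightarrow> nat \<Rightarrow> nat \<Rightarrow> nat \<Rightarrow> real" where
  "Chr G i j k = (case G of (a, b, c, d, e, f) \<Rightarrow>
     (if i = 1 \<and> j = 1 then (if k = 1 then a else b)
      else if i = 2 \<and> j = 2 then (if k = 1 then e else f)
      else (if k = 1 then c else d)))"

text \<open>Curvature components R(d_i, d_j) d_k = sum_m R_ijk^m d_m. Since the Christoffel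
  symbols are constant, the derivative terms vanish and
  R_ijk^m = sum_l (Gamma_jk^l Gamma_il^m - Gamma_ik^l Gamma_jl^m).\<close>
definition curv :: "typeA \<Rightarrow> nat \<Rightarrow> nat \<Rightarrow> nat \<Rightarrow> nat \<Rightarrow> real" where
  "curv G i j k m = (\<Sum>l\<in>{1,2}. Chr G j k l * Chr G i l m - Chr G i k l * Chr G j l m)"

definition flatA :: "typeA \<Rightarrow> bool" where
  "flatA G \<longleftrightarrow> (\<forall>i\<in>{1,2}. \<forall>j\<in>{1,2}. \<forall>k\<in>{1,2}. \<forall>m\<in>{1,2}. curv G i j k m = 0)"

text \<open>The linear projective deformation by L(x1,x2) = a1 x1 + a2 x2:
  ^L Gamma(a,b,c,d,e,f) = Gamma(a+2a1, b, c+a2, d+a1, e, f+2a2).\<close>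
definition linproj :: "real \<Rightarrow> real \<Rightarrow> typeA \<Rightarrow> typeA" where
  "linproj a1 a2 G = (case G of (a, b, c, d, e, f) \<Rightarrow>
     (a + 2*a1, b, c + a2, d + a1, e, f + 2*a2))"

end

theory Submission
  imports Defs
begin

lemma flat_iff:
  "flatA (A,B,C,D,E,F) \<longleftrightarrow> (D*C = B*E \<and> C*B+D*D-A*D-B*F=0 \<and> E*A+F*C-C*C-D*E=0)"
  unfolding flatA_def curv_def Chr_def
  by (auto simp: algebra_simps)

lemma cubic_root: "\<exists>x::real. x^3 + p*x^2 + r*x + s = 0"
proof -
  define M where "M = 1 + \<bar>p\<bar> + \<bar>r\<bar> + \<bar>s\<bar>"
  define f where "f = (\<lambda>x::real. x^3 + p*x^2 + r*x + s)"
  have M1: "M \<ge> 1" unfolding M_def by simp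
  have MM: "M \<le> M^2" using M1 by (simp add: power2_eq_square)
  have M2: "1 \<le> M^2" using M1 by (simp add: one_le_power)
  have b1: "\<bar>r\<bar>*M \<le> \<bar>r\<bar>*M^2" using MM by (simp add: mult_left_mono)
  have b2: "\<bar>s\<bar> \<le> \<bar>s\<bar>*M^2" using M2 mult_left_mono[OF M2, of "\<bar>s\<bar>"] by simp
  have b3: "\<bar>r*M\<bar> = \<bar>r\<bar>*M" using M1 by (simp add: abs_mult)
  have b4: "\<bar>p*M^2\<bar> = \<bar>p\<bar>*M^2" by (simp add: abs_mult)
  have c3: "M^3 = (1 + \<bar>p\<bar> + \<bar>r\<bar> + \<bar>s\<bar>)*M^2" unfolding M_def[symmetric]
    by (simp add: power3_eq_cube power2_eq_square)
  have c4: "(-M)^3 = -((1 + \<bar>p\<bar> + \<bar>r\<bar> + \<bar>s\<bar>)*M^2)" using c3 by simp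
  have c5: "(1 + \<bar>p\<bar> + \<bar>r\<bar> + \<bar>s\<bar>)*M^2 = M^2 + \<bar>p\<bar>*M^2 + \<bar>r\<bar>*M^2 + \<bar>s\<bar>*M^2"
    by (simp add: algebra_simps)
  have pos: "f M > 0"
    unfolding f_def using c3 c5 b1 b2 b3 b4 M2 abs_le_iff[of "r*M"] abs_le_iff[of "p*M^2"] abs_le_iff[of s]
    by linarith
  have neg: "f (-M) < 0"
    unfolding f_def using c4 c5 b1 b2 b3 b4 M2 abs_le_iff[of "r*M"] abs_le_iff[of "p*M^2"] abs_le_iff[of s]
    by simp linarith
  have "continuous_on {-M..M} f" unfolding f_def by (intro continuous_intros)
  moreover have "-M \<le> M" using M1 by simp
  ultimately obtain x where "f x = 0"
    using IVT'[of f "-M" 0 M] neg pos by force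
  thus ?thesis unfolding f_def by blast
qed

theorem theorem2p3:
  fixes G :: typeA
  shows "\<exists>(a1::real) (a2::real) (G'::typeA). flatA G' \<and> G' = linproj (- a1) (- a2) G"
proof -
  obtain a b c d e f where G: "G = (a,b,c,d,e,f)" by (cases G) auto
  define p where "p = a - 2*d"
  define q where "q = f - 2*c"
  have "\<exists>C D. D*C = b*e \<and> D*D + p*D + b*C + b*q = 0 \<and> e*p + e*D + q*C + C*C = 0"
  proof (cases "b = 0")
    case True
    then show ?thesis by (intro exI[of _ 0] exI[of _ "-p"]) (simp add: algebra_simps)
  next
    case False
    obtain D where D: "D^3 + p*D^2 + (q*b)*D + b^2*e = 0" using cubic_root by blast
    define C where "C = -(D^2+p*D)/b - q"
    have bC: "b*C = -(D^2+p*D) - b*q" using False unfolding C_def by (simp add: field_simps)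
    have e1: "D*C = b*e"
    proof -
      have "b*(D*C) = D*(b*C)" by simp
      also have "\<dots> = -(D^3 + p*D^2 + (q*b)*D)" unfolding bC by (simp add: algebra_simps power2_eq_square power3_eq_cube)
      also have "\<dots> = b^2*e" using D by linarith
      also have "\<dots> = b*(b*e)" by (simp add: power2_eq_square)
      finally have "b*(D*C) = b*(b*e)" .
      thus ?thesis using False by simp
    qed
    have e2: "D*D + p*D + b*C + b*q = 0" using bC by (simp add: power2_eq_square)
    have "b*(e*p + e*D + q*C + C*C) = 0"
    proof -
      have bq: "b*(q+C) = -(D*D+p*D)" using bC by (simp add: algebra_simps power2_eq_square)
      have "b*(e*p + e*D + q*C + C*C) = (b*e)*(p+D) + (b*C)*(q+C)" by (simp add: algebra_simps)
      also have "\<dots> = (D*C)*(p+D) + C*(b*(q+C))" unfolding e1[symmetric] by (simp add: algebra_simps)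
      also have "\<dots> = (D*C)*(p+D) + (-(D*D+p*D))*C" using bq by simp
      also have "\<dots> = 0" by (simp add: algebra_simps)
      finally show ?thesis .
    qed
    hence "e*p + e*D + q*C + C*C = 0" using False by simp
    with e1 e2 show ?thesis by blast
  qed
  then obtain C D where h: "D*C = b*e" "D*D + p*D + b*C + b*q = 0" "e*p + e*D + q*C + C*C = 0" by blast
  have G': "linproj (-(d-D)) (-(c-C)) G = (p+2*D, b, C, D, e, q+2*C)"
    by (simp add: G linproj_def p_def q_def)
  have "flatA (p+2*D, b, C, D, e, q+2*C)"
    unfolding flat_iff
  proof (intro conjI)
    show "D*C = b*e" by (rule h(1))
    have "C*b + D*D - (p+2*D)*D - b*(q+2*C) = -(D*D + p*D + b*C + b*q)" by (simp add: algebra_simps)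
    thus "C*b + D*D - (p+2*D)*D - b*(q+2*C) = 0" using h(2) by simp
    have "e*(p+2*D) + (q+2*C)*C - C*C - D*e = e*p + e*D + q*C + C*C" by (simp add: algebra_simps)
    thus "e*(p+2*D) + (q+2*C)*C - C*C - D*e = 0" using h(3) by simp
  qed
  thus ?thesis using G' by (intro exI[of _ "d-D"] exI[of _ "c-C"] exI[of _ "(p+2*D, b, C, D, e, q+2*C)"]) simp
qed

end
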